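(* Let $\mathcal N=\{\mathbb 1\}\cup\bigcup_{i=1}^{n-1}\{U^{(1)}_{2,1}U^{(2)}_{3,2}\cdots U^{(i)}_{i+1,i}:U^{(j)}\in\{\mathrm{SWAP},\mathrm{CNOT}\}\}$, where the $U^{(j)}$ are chosen independently. Then $$M=\sum_{z\in\mathbb{F}_2^n}|\hat Z_z)(\hat Z_z|=|\hat{\mathbb 1})(\hat{\mathbb 1}|+\sum_{g\in\mathcal N}\omega(g)^\dagger|\hat Z_1)(\hat Z_1|\omega(g).$$
   Context: $d=2^n$; $(A|B)=\mathrm{Tr}(A^\dagger B)$; $|A)(B|$ is the superoperator $C\mapsto(B|C)A$; products of superoperators are compositions. $\omega(g)(A)=gAg^\dagger$, $\omega(g)^\dagger(A)=g^\dagger Ag$. $M=\sum_{x\in\mathbb{F}_2^n}|E_x)(E_x|$ with $E_x=|x\rangle\langle x|$. $Z_z=\bigotimes_iZ^{z_i}$, $\hat Z_z=Z_z/\sqrt d$, $\hat{\mathbb 1}=\mathbb 1/\sqrt d$, $Z_1=Z\otimes\mathbb 1^{\otimes(n-1)}$. For a two-qubit unitary $U$, $U_{i,j}$ denotes $U$ applied to the ordered qubit pair $(i,j)$; in particular $\mathrm{CNOT}_{j+1,j}$ has control qubit $j+1$ and target qubit $j$. *)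

theory Defs
  imports Complex_Main "Jordan_Normal_Form.Matrix"
begin

text \<open>Basis index k in {0..<2^n} encodes the computational basis state |x_1 ... x_n>,
  qubit 1 being the leftmost (most significant) tensor factor.
  qbit n k i is the value x_i (in {0,1}) of qubit i (1 <= i <= n).\<close>
definition qbit :: "nat \<Rightarrow> nat \<Rightarrow> nat \<Rightarrow> nat" where
  "qbit n k i = (k div 2 ^ (n - i)) mod 2"

definition dagger :: "complex mat \<Rightarrow> complex mat" where
  "dagger A = mat (dim_col A) (dim_row A) (\<lambda>(i, j). cnj (A $$ (j, i)))"

text \<open>Hilbert-Schmidt inner product (A|B) = Tr(A^dagger B).\<close>
definition mtrace :: "complex mat \<Rightarrow> complex" where
  "mtrace A = (\<Sum>i<dim_row A. A $$ (i, i))"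

definition hs :: "complex mat \<Rightarrow> complex mat \<Rightarrow> complex" where
  "hs A B = mtrace (dagger A * B)"

text \<open>The superoperator |A)(B| : C \<mapsto> (B|C) A.\<close>
definition ketbra :: "complex mat \<Rightarrow> complex mat \<Rightarrow> (complex mat \<Rightarrow> complex mat)" where
  "ketbra A B = (\<lambda>C. hs B C \<cdot>\<^sub>m A)"

definition msum :: "nat \<Rightarrow> ('a \<Rightarrow> complex mat) \<Rightarrow> 'a set \<Rightarrow> complex mat" where
  "msum d f S = mat d d (\<lambda>ij. \<Sum>s\<in>S. f s $$ ij)"

definition sosum :: "nat \<Rightarrow> ('a \<Rightarrow> complex mat \<Rightarrow> complex mat) \<Rightarrow> 'a set
    \<Rightarrow> (complex mat \<Rightarrow> complex mat)" where
  "sosum d F S = (\<lambda>A. msum d (\<lambda>s. F s A) S)"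

definition soplus :: "nat \<Rightarrow> (complex mat \<Rightarrow> complex mat) \<Rightarrow> (complex mat \<Rightarrow> complex mat)
    \<Rightarrow> (complex mat \<Rightarrow> complex mat)" where
  "soplus d F G = (\<lambda>A. F A + G A)"

definition omega :: "complex mat \<Rightarrow> complex mat \<Rightarrow> complex mat" where
  "omega g = (\<lambda>A. g * A * dagger g)"

definition omega_dag :: "complex mat \<Rightarrow> complex mat \<Rightarrow> complex mat" where
  "omega_dag g = (\<lambda>A. dagger g * A * g)"

definition Eproj :: "nat \<Rightarrow> nat \<Rightarrow> complex mat" where
  "Eproj n x = mat (2 ^ n) (2 ^ n) (\<lambda>(r, c). if r = x \<and> c = x then 1 else 0)"

definition Mch :: "nat \<Rightarrow> complex mat \<Rightarrow> complex mat" where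
  "Mch n = sosum (2 ^ n) (\<lambda>x. ketbra (Eproj n x) (Eproj n x)) {0..<2 ^ n}"

text \<open>Z_z for z in F_2^n, with z identified with its support S = {i. z_i = 1} \<subseteq> {1..n}:
  Z_z = diag((-1)^(sum_i z_i x_i)).\<close>
definition Zop :: "nat \<Rightarrow> nat set \<Rightarrow> complex mat" where
  "Zop n S = mat (2 ^ n) (2 ^ n)
     (\<lambda>(r, c). if r = c then (-1) ^ card {i \<in> S. qbit n r i = 1} else 0)"

definition Zhat :: "nat \<Rightarrow> nat set \<Rightarrow> complex mat" where
  "Zhat n S = (1 / complex_of_real (sqrt (2 ^ n))) \<cdot>\<^sub>m Zop n S"

definition Idhat :: "nat \<Rightarrow> complex mat" where
  "Idhat n = (1 / complex_of_real (sqrt (2 ^ n))) \<cdot>\<^sub>m 1\<^sub>m (2 ^ n)"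

text \<open>Two-qubit gates (4x4, basis |ab> with a the first qubit of the ordered pair).\<close>
definition CNOT :: "complex mat" where
  "CNOT = mat 4 4 (\<lambda>(r, c). if c = (if r \<ge> 2 then (if r = 2 then 3 else 2) else r) then 1 else 0)"

definition SWAP :: "complex mat" where
  "SWAP = mat 4 4 (\<lambda>(r, c). if c = (if r = 1 then 2 else if r = 2 then 1 else r) then 1 else 0)"

definition apply2 :: "nat \<Rightarrow> complex mat \<Rightarrow> nat \<Rightarrow> nat \<Rightarrow> complex mat" where
  "apply2 n U i j = mat (2 ^ n) (2 ^ n) (\<lambda>(r, c).
     if (\<forall>k\<in>{1..n} - {i, j}. qbit n r k = qbit n c k)
     then U $$ (2 * qbit n r i + qbit n r j, 2 * qbit n c i + qbit n c j) else 0)"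

text \<open>chain n [U1,...,Ui] = U1_{2,1} U2_{3,2} ... Ui_{i+1,i}.\<close>
definition chain :: "nat \<Rightarrow> complex mat list \<Rightarrow> complex mat" where
  "chain n us = foldr (\<lambda>(j, U) acc. apply2 n U (j + 1) j * acc)
                      (zip [1..<length us + 1] us) (1\<^sub>m (2 ^ n))"

definition Nset :: "nat \<Rightarrow> complex mat set" where
  "Nset n = {1\<^sub>m (2 ^ n)} \<union>
     (\<Union>i\<in>{1..n-1}. {chain n us | us. length us = i \<and> set us \<subseteq> {SWAP, CNOT}})"

end

theory Submission
  imports Defs
begin


definition Pm :: "nat \<Rightarrow> (nat \<Rightarrow> nat) \<Rightarrow> complex mat" where
  "Pm d f = mat d d (\<lambda>(r, c). if r = f c then 1 else 0)"

definition Dg :: "nat \<Rightarrow> (nat \<Rightarrow> complex) \<Rightarrow> complex mat" where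
  "Dg d w = mat d d (\<lambda>(r, c). if r = c then w r else 0)"

lemma Pm_carrier[simp]: "Pm d f \<in> carrier_mat d d" by (simp add: Pm_def)
lemma Dg_carrier[simp]: "Dg d f \<in> carrier_mat d d" by (simp add: Dg_def)
lemma Pm_dims[simp]: "dim_row (Pm d f) = d" "dim_col (Pm d f) = d" by (simp_all add: Pm_def)
lemma Dg_dims[simp]: "dim_row (Dg d f) = d" "dim_col (Dg d f) = d" by (simp_all add: Dg_def)
lemma dagger_dims[simp]: "dim_row (dagger A) = dim_col A" "dim_col (dagger A) = dim_row A"
  by (simp_all add: dagger_def)
lemma dagger_index[simp]: "i < dim_col A \<Longrightarrow> j < dim_row A \<Longrightarrow> dagger A $$ (i,j) = cnj (A $$ (j,i))"
  by (simp add: dagger_def)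
lemma dagger_carrier[simp]: "A \<in> carrier_mat n m \<Longrightarrow> dagger A \<in> carrier_mat m n"
  by (metis carrier_matD(1) carrier_matD(2) carrier_matI dagger_dims(1) dagger_dims(2))

lemma Pm_index[simp]: "i < d \<Longrightarrow> j < d \<Longrightarrow> Pm d f $$ (i,j) = (if i = f j then 1 else 0)"
  by (simp add: Pm_def)
lemma Dg_index[simp]: "i < d \<Longrightarrow> j < d \<Longrightarrow> Dg d f $$ (i,j) = (if i = j then f i else 0)"
  by (simp add: Dg_def)

lemma dagger_Dg: "dagger (Dg d w) = Dg d (\<lambda>k. cnj (w k))"
  by (rule eq_matI) auto


lemma mult_Pm_right: assumes "A \<in> carrier_mat m d" "i < m" "j < d" "h j < d"
  shows "(A * Pm d h) $$ (i,j) = A $$ (i, h j)"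
proof -
  have "(A * Pm d h) $$ (i,j) = (\<Sum>k<d. A $$ (i,k) * (if k = h j then 1 else 0))"
    using assms by (simp add: scalar_prod_def lessThan_atLeast0)
  also have "\<dots> = (\<Sum>k<d. (if k = h j then A $$ (i,k) else 0))"
    by (rule sum.cong) auto
  also have "\<dots> = A $$ (i, h j)" using assms by (simp add: sum.delta')
  finally show ?thesis .
qed

lemma mult_daggerPm_left: assumes "A \<in> carrier_mat d m" "i < d" "j < m" "h i < d"
  shows "(dagger (Pm d h) * A) $$ (i,j) = A $$ (h i, j)"
proof -
  have "(dagger (Pm d h) * A) $$ (i,j) = (\<Sum>k<d. cnj (if k = h i then 1 else 0) * A $$ (k,j))"
    using assms by (simp add: scalar_prod_def lessThan_atLeast0)
  also have "\<dots> = (\<Sum>k<d. (if k = h i then A $$ (k,j) else 0))"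
    by (rule sum.cong) auto
  also have "\<dots> = A $$ (h i, j)" using assms by (simp add: sum.delta')
  finally show ?thesis .
qed

lemma conj_Pm: assumes "h ` {..<d} \<subseteq> {..<d}" "A \<in> carrier_mat d d" "i < d" "j < d"
  shows "(dagger (Pm d h) * A * Pm d h) $$ (i,j) = A $$ (h i, h j)"
proof -
  have hj: "h j < d" "h i < d" using assms by auto
  have "(dagger (Pm d h) * A * Pm d h) $$ (i,j) = (dagger (Pm d h) * A) $$ (i, h j)"
    using assms hj by (intro mult_Pm_right) auto
  also have "\<dots> = A $$ (h i, h j)" using assms hj by (intro mult_daggerPm_left) auto
  finally show ?thesis .
qed

lemma conj_Pm_Dg: assumes "h ` {..<d} \<subseteq> {..<d}" "inj_on h {..<d}"
  shows "dagger (Pm d h) * Dg d w * Pm d h = Dg d (w \<circ> h)"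
proof (rule eq_matI)
  fix i j assume ij: "i < dim_row (Dg d (w \<circ> h))" "j < dim_col (Dg d (w \<circ> h))"
  then have "h i < d" "h j < d" using assms(1) by auto
  moreover have "(h i = h j) = (i = j)" using assms(2) ij by (auto dest: inj_onD)
  ultimately show "(dagger (Pm d h) * Dg d w * Pm d h) $$ (i, j) = Dg d (w \<circ> h) $$ (i, j)"
    using ij by (subst conj_Pm[OF assms(1)]) auto
qed auto

lemma mtrace_comm: assumes "A \<in> carrier_mat n m" "B \<in> carrier_mat m n"
  shows "mtrace (A * B) = mtrace (B * A)"
proof -
  have "mtrace (A * B) = (\<Sum>i<n. \<Sum>k<m. A $$ (i,k) * B $$ (k,i))"
    using assms by (simp add: mtrace_def scalar_prod_def lessThan_atLeast0)
  also have "\<dots> = (\<Sum>k<m. \<Sum>i<n. B $$ (k,i) * A $$ (i,k))"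
    by (subst sum.swap) (simp add: mult.commute)
  also have "\<dots> = mtrace (B * A)"
    using assms by (simp add: mtrace_def scalar_prod_def lessThan_atLeast0)
  finally show ?thesis .
qed

lemma hs_Dg: assumes "A \<in> carrier_mat d d"
  shows "hs (Dg d w) A = (\<Sum>k<d. cnj (w k) * A $$ (k,k))"
proof -
  have "hs (Dg d w) A = (\<Sum>i<d. \<Sum>k<d. (if i = k then cnj (w i) else 0) * A $$ (k,i))"
    using assms by (simp add: hs_def mtrace_def dagger_Dg scalar_prod_def lessThan_atLeast0)
  also have "\<dots> = (\<Sum>i<d. \<Sum>k<d. if k = i then cnj (w i) * A $$ (i,i) else 0)"
    by (intro sum.cong) auto
  also have "\<dots> = (\<Sum>i<d. cnj (w i) * A $$ (i,i))"
    by (simp add: sum.delta)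
  finally show ?thesis .
qed

lemma key: assumes "h ` {..<d} \<subseteq> {..<d}" "inj_on h {..<d}" "A \<in> carrier_mat d d"
  shows "omega_dag (Pm d h) (ketbra (Dg d z) (Dg d z) (omega (Pm d h) A))
       = ketbra (Dg d (z \<circ> h)) (Dg d (z \<circ> h)) A"
proof -
  let ?P = "Pm d h"
  have Pc: "?P \<in> carrier_mat d d" "dagger ?P \<in> carrier_mat d d"
    "dagger (Dg d z) \<in> carrier_mat d d" "?P * A \<in> carrier_mat d d" "dagger (Dg d z) * ?P \<in> carrier_mat d d"
    "dagger ?P * dagger (Dg d z) \<in> carrier_mat d d" "A * dagger ?P \<in> carrier_mat d d"
    "dagger (Dg d z) * ?P * A \<in> carrier_mat d d"
    using assms(3) by auto
  let ?Z = "dagger (Dg d z)" and ?Q = "dagger ?P"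
  have A: "A \<in> carrier_mat d d" by fact
  have e1: "?Z * (?P * A * ?Q) = ?Z * ?P * A * ?Q"
  proof -
    have "?P * A * ?Q = ?P * (A * ?Q)" by (rule assoc_mult_mat[OF Pc(1) A Pc(2)])
    moreover have "?Z * (?P * (A * ?Q)) = ?Z * ?P * (A * ?Q)" by (rule assoc_mult_mat[OF Pc(3,1) Pc(7), symmetric])
    moreover have "?Z * ?P * (A * ?Q) = ?Z * ?P * A * ?Q" by (rule assoc_mult_mat[OF Pc(5) A Pc(2), symmetric])
    ultimately show ?thesis by simp
  qed
  have e2: "?Q * (?Z * ?P * A) = ?Q * ?Z * ?P * A"
  proof -
    have "?Z * ?P * A = ?Z * (?P * A)" by (rule assoc_mult_mat[OF Pc(3,1) A])
    moreover have "?Q * (?Z * (?P * A)) = ?Q * ?Z * (?P * A)" by (rule assoc_mult_mat[OF Pc(2,3,4), symmetric])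
    moreover have "?Q * ?Z * (?P * A) = ?Q * ?Z * ?P * A" by (rule assoc_mult_mat[OF Pc(6,1) A, symmetric])
    ultimately show ?thesis by simp
  qed
  have "hs (Dg d z) (omega ?P A) = mtrace (?Z * (?P * A * ?Q))"
    by (simp add: hs_def omega_def)
  also have "\<dots> = mtrace ((?Z * ?P * A) * ?Q)" by (simp only: e1)
  also have "\<dots> = mtrace (?Q * (?Z * ?P * A))"
    using Pc by (intro mtrace_comm[of _ d d]) auto
  also have "\<dots> = mtrace ((?Q * ?Z * ?P) * A)" by (simp only: e2)
  also have "\<dots> = mtrace (dagger (Dg d (z \<circ> h)) * A)"
    by (simp add: dagger_Dg conj_Pm_Dg[OF assms(1,2)] comp_def)
  finally have hs_eq: "hs (Dg d z) (omega ?P A) = hs (Dg d (z \<circ> h)) A" by (simp add: hs_def)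
  have "omega_dag ?P (ketbra (Dg d z) (Dg d z) (omega ?P A))
      = dagger ?P * (hs (Dg d z) (omega ?P A) \<cdot>\<^sub>m Dg d z) * ?P"
    by (simp add: omega_dag_def ketbra_def)
  also have "\<dots> = hs (Dg d z) (omega ?P A) \<cdot>\<^sub>m (dagger ?P * Dg d z * ?P)"
  proof -
    have c: "dagger ?P * Dg d z \<in> carrier_mat d d" by (rule mult_carrier_mat[OF Pc(2) Dg_carrier])
    show ?thesis
      by (simp only: mult_smult_distrib[OF Pc(2) Dg_carrier] mult_smult_assoc_mat[OF c Pc(1)])
  qed
  also have "\<dots> = ketbra (Dg d (z \<circ> h)) (Dg d (z \<circ> h)) A"
    by (simp add: ketbra_def hs_eq conj_Pm_Dg[OF assms(1,2)])
  finally show ?thesis .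
qed

lemma Pm_mult: assumes "g ` {..<d} \<subseteq> {..<d}"
  shows "Pm d f * Pm d g = Pm d (f \<circ> g)"
proof (rule eq_matI)
  fix i j assume ij: "i < dim_row (Pm d (f \<circ> g))" "j < dim_col (Pm d (f \<circ> g))"
  then have "g j < d" using assms by auto
  with ij show "(Pm d f * Pm d g) $$ (i, j) = Pm d (f \<circ> g) $$ (i, j)"
    by (subst mult_Pm_right[of _ d]) auto
qed auto

lemma Pm_id: "Pm d id = 1\<^sub>m d"
  by (rule eq_matI) auto



lemma bit_nat_flip: "bit (flip_bit p (r::nat)) m = (if m = p then \<not> bit r m else bit r m)"
  by (auto simp: bit_flip_bit_iff)

lemma nat_less_pow_bits: "(x::nat) < 2 ^ n \<longleftrightarrow> (\<forall>m\<ge>n. \<not> bit x m)"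
proof -
  have "x < 2 ^ n \<longleftrightarrow> take_bit n x = x" by (rule take_bit_nat_eq_self_iff[symmetric])
  also have "\<dots> \<longleftrightarrow> (\<forall>m. bit (take_bit n x) m = bit x m)"
  proof
    assume "take_bit n x = x" then show "\<forall>m. bit (take_bit n x) m = bit x m" by simp
  next
    assume "\<forall>m. bit (take_bit n x) m = bit x m" then show "take_bit n x = x" by (intro bit_eqI) simp
  qed
  also have "\<dots> \<longleftrightarrow> (\<forall>m\<ge>n. \<not> bit x m)" unfolding bit_take_bit_iff by (meson not_le)
  finally show ?thesis .
qed

lemma nat_eq_bits: assumes "(r::nat) < 2 ^ n" "c < 2 ^ n" "\<forall>m<n. bit r m = bit c m"
  shows "r = c"
proof -
  have "\<forall>m. bit r m = bit c m"
    using assms nat_less_pow_bits[of r n] nat_less_pow_bits[of c n] by (metis not_le)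
  then show ?thesis by (intro bit_eqI) simp
qed
lemma qbit_bit: "qbit n k i = (if bit k (n - i) then 1 else 0)"
  unfolding qbit_def bit_nat_def mod_2_eq_odd by simp

definition cn :: "nat \<Rightarrow> nat \<Rightarrow> nat \<Rightarrow> nat" where
  "cn p q r = (if bit r q then flip_bit p r else r)"
definition sw :: "nat \<Rightarrow> nat \<Rightarrow> nat \<Rightarrow> nat" where
  "sw p q r = (if bit r p = bit r q then r else flip_bit p (flip_bit q r))"
definition Tg :: "nat \<Rightarrow> complex mat \<Rightarrow> nat \<Rightarrow> nat \<Rightarrow> nat" where
  "Tg n U j = (if U = CNOT then cn (n - j) (n - j - 1) else sw (n - j) (n - j - 1))"

lemma bit_cn: "p \<noteq> q \<Longrightarrow> bit (cn p q r) m = (if m = p then bit r p \<noteq> bit r q else bit r m)"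
  by (auto simp: cn_def bit_nat_flip)
lemma bit_sw: "p \<noteq> q \<Longrightarrow> bit (sw p q r) m = (if m = p then bit r q else if m = q then bit r p else bit r m)"
  by (auto simp: sw_def bit_nat_flip)

lemma bit_Tg: assumes "1 \<le> j" "j + 1 \<le> n"
  shows "bit (Tg n U j r) m = (if m = n - j then (if U = CNOT then bit r (n-j) \<noteq> bit r (n-j-1) else bit r (n-j-1))
     else if m = n - j - 1 then (if U = CNOT then bit r m else bit r (n-j)) else bit r m)"
  using assms by (auto simp: Tg_def bit_cn bit_sw)

lemma Tg_less: assumes "1 \<le> j" "j + 1 \<le> n" "r < 2 ^ n" shows "Tg n U j r < 2 ^ n"
  unfolding nat_less_pow_bits
proof (intro allI impI)
  fix m assume m: "n \<le> m"
  then have "m \<noteq> n - j" "m \<noteq> n - j - 1" using assms(1,2) by auto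
  then have "bit (Tg n U j r) m = bit r m" by (simp add: bit_Tg[OF assms(1,2)])
  then show "\<not> bit (Tg n U j r) m" using assms(3) m unfolding nat_less_pow_bits by simp
qed

lemma Tg_invol: assumes "1 \<le> j" "j + 1 \<le> n" shows "Tg n U j (Tg n U j r) = r"
  using assms by (intro bit_eqI) (auto simp: bit_Tg[OF assms])

lemma Tg_inj: assumes "1 \<le> j" "j + 1 \<le> n" shows "inj_on (Tg n U j) A"
  by (metis Tg_invol[OF assms] inj_onI)

lemma CNOT_idx: "CNOT $$ (2 * of_bool a + of_bool b, 2 * of_bool a' + of_bool b') =
   (if a' = a \<and> b' = (b \<noteq> a) then 1 else 0)"
  by (cases a; cases b; cases a'; cases b') (simp_all add: CNOT_def)

lemma SWAP_idx: "SWAP $$ (2 * of_bool a + of_bool b, 2 * of_bool a' + of_bool b') =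
   (if a' = b \<and> b' = a then 1 else 0)"
  by (cases a; cases b; cases a'; cases b') (simp_all add: SWAP_def)

lemma CNOT_ne_SWAP: "CNOT \<noteq> SWAP"
proof
  assume "CNOT = SWAP"
  then have "CNOT $$ (1,1) = SWAP $$ (1,1)" by simp
  then show False by (simp add: CNOT_def SWAP_def)
qed

lemma apply2_Pm: assumes j: "1 \<le> j" "j + 1 \<le> n" and U: "U \<in> {SWAP, CNOT}"
  shows "apply2 n U (j + 1) j = Pm (2 ^ n) (Tg n U j)"
proof (rule eq_matI)
  fix r c assume "r < dim_row (Pm (2 ^ n) (Tg n U j))" "c < dim_col (Pm (2 ^ n) (Tg n U j))"
  then have rc: "r < 2 ^ n" "c < 2 ^ n" by auto
  define p where "p = n - j"
  define q where "q = n - j - 1"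
  have nq: "n - Suc j = q" and np: "n - j = p" and pq: "p \<noteq> q" "p < n" "q < n"
    using j by (auto simp: p_def q_def)
  define R where "R = (\<forall>m<n. m \<noteq> p \<and> m \<noteq> q \<longrightarrow> bit r m = bit c m)"
  have cond: "(\<forall>k\<in>{1..n} - {j + 1, j}. qbit n r k = qbit n c k) \<longleftrightarrow> R"
  proof
    assume H: "\<forall>k\<in>{1..n} - {j + 1, j}. qbit n r k = qbit n c k"
    show R unfolding R_def
    proof (intro allI impI)
      fix m assume m: "m < n" "m \<noteq> p \<and> m \<noteq> q"
      then have "n - m \<in> {1..n} - {j + 1, j}" using j by (auto simp: p_def q_def)
      with H have "qbit n r (n - m) = qbit n c (n - m)" by blast
      then show "bit r m = bit c m" using m by (simp add: qbit_bit split: if_splits)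
    qed
  next
    assume R
    show "\<forall>k\<in>{1..n} - {j + 1, j}. qbit n r k = qbit n c k"
    proof
      fix k assume "k \<in> {1..n} - {j + 1, j}"
      then have "n - k < n" "n - k \<noteq> p" "n - k \<noteq> q" using j by (auto simp: p_def q_def)
      then show "qbit n r k = qbit n c k" using \<open>R\<close> by (simp add: qbit_bit R_def)
    qed
  qed
  have Tless: "Tg n U j c < 2 ^ n" using Tg_less[OF j rc(2)] .
  have eqT: "(r = Tg n U j c) \<longleftrightarrow> R \<and> bit r p = bit (Tg n U j c) p \<and> bit r q = bit (Tg n U j c) q"
  proof
    assume "r = Tg n U j c" then show "R \<and> bit r p = bit (Tg n U j c) p \<and> bit r q = bit (Tg n U j c) q"
      unfolding R_def using pq by (auto simp: bit_Tg[OF j] p_def q_def)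
  next
    assume H: "R \<and> bit r p = bit (Tg n U j c) p \<and> bit r q = bit (Tg n U j c) q"
    have "\<forall>m<n. bit r m = bit (Tg n U j c) m"
    proof (intro allI impI)
      fix m assume "m < n"
      then show "bit r m = bit (Tg n U j c) m" using H unfolding R_def
        by (cases "m = p \<or> m = q") (auto simp: bit_Tg[OF j] p_def q_def)
    qed
    then show "r = Tg n U j c" using nat_eq_bits[OF rc(1) Tless] by blast
  qed
  have qr: "qbit n r (j+1) = of_bool (bit r q)" "qbit n r j = of_bool (bit r p)"
     "qbit n c (j+1) = of_bool (bit c q)" "qbit n c j = of_bool (bit c p)"
    by (simp_all add: qbit_bit nq np)
  have TP: "bit (Tg n U j c) p = (if U = CNOT then bit c p \<noteq> bit c q else bit c q)"
     "bit (Tg n U j c) q = (if U = CNOT then bit c q else bit c p)"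
    using pq by (auto simp: bit_Tg[OF j] p_def q_def)
  have lhs: "apply2 n U (j + 1) j $$ (r, c) = (if (\<forall>k\<in>{1..n} - {j + 1, j}. qbit n r k = qbit n c k)
     then U $$ (2 * qbit n r (j + 1) + qbit n r j, 2 * qbit n c (j + 1) + qbit n c j) else 0)"
    using rc by (simp add: apply2_def)
  also have "\<dots> = (if R then U $$ (2 * of_bool (bit r q) + of_bool (bit r p),
        2 * of_bool (bit c q) + of_bool (bit c p)) else 0)"
    by (simp only: cond qr)
  finally have lhs': "apply2 n U (j + 1) j $$ (r, c) = (if R then U $$ (2 * of_bool (bit r q) + of_bool (bit r p),
        2 * of_bool (bit c q) + of_bool (bit c p)) else 0)" .
  have rhs: "Pm (2 ^ n) (Tg n U j) $$ (r, c) = (if R \<and> bit r p = (if U = CNOT then bit c p \<noteq> bit c q else bit c q)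
      \<and> bit r q = (if U = CNOT then bit c q else bit c p) then 1 else 0)"
    using rc by (simp only: Pm_index eqT TP)
  show "apply2 n U (j + 1) j $$ (r, c) = Pm (2 ^ n) (Tg n U j) $$ (r, c)"
  proof (cases "U = CNOT")
    case True
    show ?thesis unfolding lhs' rhs unfolding True CNOT_idx by auto
  next
    case False
    then have U': "U = SWAP" using U by auto
    have ne: "SWAP \<noteq> CNOT" using CNOT_ne_SWAP by metis
    show ?thesis unfolding lhs' rhs unfolding U' SWAP_idx using ne by auto
  qed
qed (auto simp: apply2_def)



definition chain' :: "nat \<Rightarrow> nat \<Rightarrow> complex mat list \<Rightarrow> complex mat" where
  "chain' n s us = foldr (\<lambda>(j, U) acc. apply2 n U (j + 1) j * acc)
                      (zip [s..<s + length us] us) (1\<^sub>m (2 ^ n))"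

lemma chain_eq: "chain n us = chain' n 1 us"
  by (simp add: chain_def chain'_def add.commute)

lemma chain'_Nil: "chain' n s [] = 1\<^sub>m (2 ^ n)"
  by (simp add: chain'_def)

lemma chain'_Cons: "chain' n s (U # us) = apply2 n U (s + 1) s * chain' n (s + 1) us"
proof -
  have "s < s + length (U # us)" by simp
  from upt_conv_Cons[OF this] have "[s..<s + length (U # us)] = s # [Suc s..<s + length (U # us)]" .
  moreover have "s + length (U # us) = s + 1 + length us" by simp
  ultimately have e: "[s..<s + length (U # us)] = s # [s + 1..<s + 1 + length us]" by (metis Suc_eq_plus1)
  show ?thesis unfolding chain'_def e by simp
qed

fun chF :: "nat \<Rightarrow> nat \<Rightarrow> complex mat list \<Rightarrow> nat \<Rightarrow> nat" where
  "chF n s [] = id"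
| "chF n s (U # us) = Tg n U s \<circ> chF n (s + 1) us"

lemma chain'_Pm: "1 \<le> s \<Longrightarrow> s + length us \<le> n \<Longrightarrow> set us \<subseteq> {SWAP, CNOT} \<Longrightarrow>
  chain' n s us = Pm (2 ^ n) (chF n s us) \<and> chF n s us ` {..<2 ^ n} \<subseteq> {..<2 ^ n}
  \<and> inj_on (chF n s us) {..<2 ^ n}"
proof (induction us arbitrary: s)
  case Nil
  have "Pm (2 ^ n) (\<lambda>x. x) = 1\<^sub>m (2 ^ n)" by (rule eq_matI) auto
  then show ?case by (simp add: chain'_Nil)
next
  case (Cons U us)
  have j: "1 \<le> s" "s + 1 \<le> n" using Cons.prems by auto
  have IH: "chain' n (s + 1) us = Pm (2 ^ n) (chF n (s + 1) us)"
    "chF n (s + 1) us ` {..<2 ^ n} \<subseteq> {..<2 ^ n}" "inj_on (chF n (s + 1) us) {..<2 ^ n}"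
    using Cons.IH[of "s + 1"] Cons.prems by auto
  have U: "U \<in> {SWAP, CNOT}" using Cons.prems by auto
  have "chain' n s (U # us) = Pm (2 ^ n) (Tg n U s) * Pm (2 ^ n) (chF n (s + 1) us)"
    unfolding chain'_Cons IH(1) apply2_Pm[OF j U] ..
  also have "\<dots> = Pm (2 ^ n) (chF n s (U # us))"
    unfolding Pm_mult[OF IH(2)] chF.simps ..
  finally have 1: "chain' n s (U # us) = Pm (2 ^ n) (chF n s (U # us))" .
  have 2: "chF n s (U # us) ` {..<2 ^ n} \<subseteq> {..<2 ^ n}"
    using IH(2) Tg_less[OF j] by auto
  have 3: "inj_on (chF n s (U # us)) {..<2 ^ n}"
    using IH(3) Tg_inj[OF j] by (auto intro: comp_inj_on)
  show ?case using 1 2 3 by blast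
qed

definition sgr :: "nat \<Rightarrow> nat set \<Rightarrow> nat \<Rightarrow> real" where
  "sgr n S r = (\<Prod>i\<in>S. if bit r (n - i) then -1 else 1)"

fun Sof :: "nat \<Rightarrow> complex mat list \<Rightarrow> nat set" where
  "Sof s [] = {s}"
| "Sof s (U # us) = (if U = CNOT then insert s (Sof (s + 1) us) else Sof (s + 1) us)"

lemma Sof_mem: "i \<in> Sof s us \<longleftrightarrow> i = s + length us \<or> (s \<le> i \<and> i < s + length us \<and> us ! (i - s) = CNOT)"
proof (induction us arbitrary: s)
  case Nil
  then show ?case by auto
next
  case (Cons U us)
  show ?case
  proof (cases "i = s")
    case True
    then show ?thesis using Cons.IH[of "Suc s"] by auto
  next
    case False
    then have "(s \<le> i) = (s + 1 \<le> i)" by auto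
    moreover have "s + 1 \<le> i \<Longrightarrow> (U # us) ! (i - s) = us ! (i - (s + 1))"
      by (simp add: nth_Cons' Suc_diff_Suc)
    ultimately show ?thesis using False by (auto simp add: Cons.IH)
  qed
qed

lemma Sof_finite: "finite (Sof s us)"
  by (induction us arbitrary: s) auto

lemma Sof_sub: "Sof s us \<subseteq> {s..s + length us}"
  by (auto simp: Sof_mem)

lemma sign_chain: "1 \<le> s \<Longrightarrow> s + length us \<le> n \<Longrightarrow>
  (\<forall>m. n - s < m \<longrightarrow> bit (chF n s us r) m = bit r m) \<and>
  ((if bit (chF n s us r) (n - s) then -1 else 1) = sgr n (Sof s us) r)"
proof (induction us arbitrary: s)
  case Nil
  then show ?case by (simp add: sgr_def)
next
  case (Cons U us)
  have j: "1 \<le> s" "s + 1 \<le> n" using Cons.prems by auto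
  define x where "x = chF n (s + 1) us r"
  have IH: "\<forall>m. n - (s + 1) < m \<longrightarrow> bit x m = bit r m"
    "(if bit x (n - (s + 1)) then -1 else 1) = sgr n (Sof (s + 1) us) r"
    using Cons.IH[of "s + 1"] Cons.prems unfolding x_def by auto
  have ch: "chF n s (U # us) r = Tg n U s x" by (simp add: x_def)
  have nd: "n - s - 1 = n - (s + 1)" by simp
  have a: "\<forall>m. n - s < m \<longrightarrow> bit (chF n s (U # us) r) m = bit r m"
    unfolding ch using IH(1) j by (auto simp: bit_Tg[OF j])
  have xs: "bit x (n - s) = bit r (n - s)" using IH(1) j by auto
  have IH2': "sgr n (Sof (Suc s) us) r = (if bit x (n - Suc s) then -1 else 1)" using IH(2) by simp
  have nots: "s \<notin> Sof (s + 1) us" using Sof_sub[of "s + 1" us] by auto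
  have b: "(if bit (chF n s (U # us) r) (n - s) then -1 else 1) = sgr n (Sof s (U # us)) r"
  proof (cases "U = CNOT")
    case True
    have "sgr n (Sof s (U # us)) r = (if bit r (n - s) then -1 else 1) * sgr n (Sof (s + 1) us) r"
      using True nots Sof_finite[of "s + 1" us] by (simp add: sgr_def)
    also have "\<dots> = (if bit (chF n s (U # us) r) (n - s) then -1 else 1)"
      unfolding ch using True xs by (simp add: bit_Tg[OF j] IH2')
    finally show ?thesis by simp
  next
    case False
    then show ?thesis unfolding ch using IH(2) by (simp add: bit_Tg[OF j] nd)
  qed
  show ?case using a b by blast
qed



abbreviation c0 :: "nat \<Rightarrow> complex" where "c0 n \<equiv> 1 / complex_of_real (sqrt (2 ^ n))"

lemma pm1_prod: "finite S \<Longrightarrow> (\<Prod>i\<in>S. if P i then -1 else 1 :: real) = (-1) ^ card {i\<in>S. P i}"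
proof (induction S rule: finite_induct)
  case empty
  then show ?case by simp
next
  case (insert x F)
  have "{i \<in> insert x F. P i} = (if P x then insert x {i\<in>F. P i} else {i\<in>F. P i})" by auto
  then show ?case using insert by (simp add: card_insert_disjoint)
qed

lemma Zop_Dg: "finite S \<Longrightarrow> Zop n S = Dg (2 ^ n) (\<lambda>r. complex_of_real (sgr n S r))"
proof (rule eq_matI)
  fix i j assume "finite S" "i < dim_row (Dg (2 ^ n) (\<lambda>r. complex_of_real (sgr n S r)))"
    "j < dim_col (Dg (2 ^ n) (\<lambda>r. complex_of_real (sgr n S r)))"
  moreover have "{k \<in> S. qbit n i k = 1} = {k \<in> S. bit i (n - k)}" by (auto simp: qbit_bit)
  ultimately show "Zop n S $$ (i, j) = Dg (2 ^ n) (\<lambda>r. complex_of_real (sgr n S r)) $$ (i, j)"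
    by (cases "i = j") (simp_all add: Zop_def sgr_def pm1_prod)
qed (auto simp: Zop_def)

lemma Zhat_Dg: "finite S \<Longrightarrow> Zhat n S = Dg (2 ^ n) (\<lambda>r. c0 n * complex_of_real (sgr n S r))"
  by (rule eq_matI) (auto simp: Zhat_def Zop_Dg)

lemma Idhat_Zhat: "Idhat n = Zhat n {}"
  by (rule eq_matI) (auto simp: Zhat_def Idhat_def Zop_def)

lemma Eproj_Dg: "Eproj n x = Dg (2 ^ n) (\<lambda>k. if k = x then 1 else 0)"
  by (rule eq_matI) (auto simp: Eproj_def)

lemma ketbra_Dg_dims[simp]: "dim_row (ketbra (Dg d w) (Dg d w) A) = d" "dim_col (ketbra (Dg d w) (Dg d w) A) = d"
  by (simp_all add: ketbra_def)

lemma ketbra_Dg_idx: "A \<in> carrier_mat d d \<Longrightarrow> r < d \<Longrightarrow> c < d \<Longrightarrow>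
  ketbra (Dg d w) (Dg d w) A $$ (r, c) = (if r = c then (\<Sum>k<d. cnj (w k) * A $$ (k, k)) * w r else 0)"
  by (simp add: ketbra_def hs_Dg)

lemma msum_idx: "r < d \<Longrightarrow> c < d \<Longrightarrow> msum d f S $$ (r, c) = (\<Sum>s\<in>S. f s $$ (r, c))"
  by (simp add: msum_def)
lemma msum_dims[simp]: "dim_row (msum d f S) = d" "dim_col (msum d f S) = d"
  by (simp_all add: msum_def)

lemma c0sq: "c0 n * c0 n * 2 ^ n = 1"
proof -
  have s: "sqrt (2 ^ n) * sqrt (2 ^ n) = (2::real) ^ n" by simp
  have "complex_of_real (sqrt (2 ^ n)) * complex_of_real (sqrt (2 ^ n)) = complex_of_real ((2::real) ^ n)"
    by (simp only: of_real_mult[symmetric] s)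
  then have "complex_of_real (sqrt (2 ^ n)) * complex_of_real (sqrt (2 ^ n)) = 2 ^ n" by simp
  moreover have "complex_of_real (sqrt (2 ^ n)) \<noteq> 0" by simp
  ultimately show ?thesis by (simp add: field_simps)
qed

lemma orth: assumes "k < 2 ^ n" "r < 2 ^ n"
  shows "(\<Sum>S\<in>Pow {1..n}. sgr n S k * sgr n S r) = (if k = r then 2 ^ n else 0)"
proof -
  define f where "f i = (if bit k (n - i) then -1 else 1) * (if bit r (n - i) then -1 else (1::real))" for i
  have "(\<Sum>S\<in>Pow {1..n}. sgr n S k * sgr n S r) = (\<Sum>S\<in>Pow {1..n}. (\<Prod>i\<in>S. f i) * (\<Prod>i\<in>{1..n} - S. 1))"
    by (simp add: sgr_def f_def prod.distrib)
  also have "\<dots> = (\<Prod>i\<in>{1..n}. f i + 1)"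
    by (rule prod_add[symmetric]) simp
  also have "\<dots> = (if k = r then 2 ^ n else 0)"
  proof (cases "k = r")
    case True
    then have "\<And>i. f i + 1 = 2" by (simp add: f_def)
    then show ?thesis using True by simp
  next
    case False
    then obtain m where m: "m < n" "bit k m \<noteq> bit r m" using nat_eq_bits[OF assms] by blast
    then have "n - m \<in> {1..n}" "n - (n - m) = m" by auto
    moreover have "f (n - m) + 1 = 0" using m by (auto simp: f_def)
    ultimately have "\<exists>i\<in>{1..n}. f i + 1 = 0" by metis
    then have "(\<Prod>i\<in>{1..n}. f i + 1) = 0" by (rule prod_zero[OF finite_atLeastAtMost])
    then show ?thesis using False by simp
  qed
  finally show ?thesis .
qed

lemma cnj_c0: "cnj (c0 n) = c0 n" by simp

lemma term_eq: "cnj c = c \<Longrightarrow> cnj (c * complex_of_real a) * B * (c * complex_of_real b) = c * c * B * complex_of_real (a * b)"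
  by (simp add: mult_ac)

lemma part1: assumes A: "A \<in> carrier_mat (2 ^ n) (2 ^ n)"
  shows "Mch n A = sosum (2 ^ n) (\<lambda>S. ketbra (Zhat n S) (Zhat n S)) (Pow {1..n}) A"
proof (rule eq_matI)
  fix r c
  assume "r < dim_row (sosum (2 ^ n) (\<lambda>S. ketbra (Zhat n S) (Zhat n S)) (Pow {1..n}) A)"
     "c < dim_col (sosum (2 ^ n) (\<lambda>S. ketbra (Zhat n S) (Zhat n S)) (Pow {1..n}) A)"
  then have rc: "r < 2 ^ n" "c < 2 ^ n" by (simp_all add: sosum_def)
  have E: "\<And>x. x < 2 ^ n \<Longrightarrow> (\<Sum>k<2 ^ n. cnj (if k = x then 1 else 0) * A $$ (k, k)) = A $$ (x, x)"
  proof -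
    fix x :: nat assume "x < 2 ^ n"
    have "(\<Sum>k<2 ^ n. cnj (if k = x then 1 else 0) * A $$ (k, k)) = (\<Sum>k<2 ^ n. if k = x then A $$ (k, k) else 0)"
      by (rule sum.cong) auto
    then show "(\<Sum>k<2 ^ n. cnj (if k = x then 1 else 0) * A $$ (k, k)) = A $$ (x, x)"
      using \<open>x < 2 ^ n\<close> by simp
  qed
  have L: "Mch n A $$ (r, c) = (if r = c then A $$ (r, r) else 0)"
  proof -
    have "Mch n A $$ (r, c) = (\<Sum>x\<in>{0..<2 ^ n}. ketbra (Eproj n x) (Eproj n x) A $$ (r, c))"
      using rc by (simp add: Mch_def sosum_def msum_idx)
    also have "\<dots> = (\<Sum>x\<in>{0..<2 ^ n}. if r = c then A $$ (x, x) * (if r = x then 1 else 0) else 0)"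
      by (rule sum.cong) (auto simp: Eproj_Dg ketbra_Dg_idx E A rc)
    also have "\<dots> = (if r = c then A $$ (r, r) else 0)"
      using rc by (simp add: if_distrib[of "\<lambda>x. _ * x"] cong: if_cong)
    finally show ?thesis .
  qed
  have R: "sosum (2 ^ n) (\<lambda>S. ketbra (Zhat n S) (Zhat n S)) (Pow {1..n}) A $$ (r, c)
     = (\<Sum>S\<in>Pow {1..n}. if r = c then (\<Sum>k<2 ^ n. cnj (c0 n * complex_of_real (sgr n S k)) * A $$ (k, k))
          * (c0 n * complex_of_real (sgr n S r)) else 0)"
  proof -
    have "sosum (2 ^ n) (\<lambda>S. ketbra (Zhat n S) (Zhat n S)) (Pow {1..n}) A $$ (r, c)
       = (\<Sum>S\<in>Pow {1..n}. ketbra (Zhat n S) (Zhat n S) A $$ (r, c))"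
      using rc by (simp add: sosum_def msum_idx)
    also have "\<dots> = (\<Sum>S\<in>Pow {1..n}. if r = c then (\<Sum>k<2 ^ n. cnj (c0 n * complex_of_real (sgr n S k)) * A $$ (k, k))
          * (c0 n * complex_of_real (sgr n S r)) else 0)"
    proof (rule sum.cong[OF refl])
      fix S assume "S \<in> Pow {1..n}"
      then have fS: "finite S" by (auto intro: finite_subset)
      show "ketbra (Zhat n S) (Zhat n S) A $$ (r, c) = (if r = c then (\<Sum>k<2 ^ n. cnj (c0 n * complex_of_real (sgr n S k)) * A $$ (k, k))
          * (c0 n * complex_of_real (sgr n S r)) else 0)"
        unfolding Zhat_Dg[OF fS] by (rule ketbra_Dg_idx[OF A rc])
    qed
    finally show ?thesis .
  qed
  have main: "(\<Sum>S\<in>Pow {1..n}. (\<Sum>k<2 ^ n. cnj (c0 n * complex_of_real (sgr n S k)) * A $$ (k, k))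
          * (c0 n * complex_of_real (sgr n S r))) = A $$ (r, r)"
  proof -
    have "(\<Sum>S\<in>Pow {1..n}. (\<Sum>k<2 ^ n. cnj (c0 n * complex_of_real (sgr n S k)) * A $$ (k, k))
          * (c0 n * complex_of_real (sgr n S r)))
        = (\<Sum>S\<in>Pow {1..n}. \<Sum>k<2 ^ n. (c0 n * c0 n * A $$ (k, k)) * complex_of_real (sgr n S k * sgr n S r))"
      unfolding sum_distrib_right by (intro sum.cong refl) (simp add: term_eq cnj_c0 mult.assoc)
    also have "\<dots> = (\<Sum>k<2 ^ n. (c0 n * c0 n * A $$ (k, k)) * complex_of_real (\<Sum>S\<in>Pow {1..n}. sgr n S k * sgr n S r))"
      by (subst sum.swap) (simp add: sum_distrib_left)
    also have "\<dots> = (\<Sum>k<2 ^ n. if k = r then (c0 n * c0 n * 2 ^ n) * A $$ (r, r) else 0)"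
    proof (rule sum.cong[OF refl])
      fix k assume "k \<in> {..<(2::nat) ^ n}" then have k: "k < 2 ^ n" by simp
      show "(c0 n * c0 n * A $$ (k, k)) * complex_of_real (\<Sum>S\<in>Pow {1..n}. sgr n S k * sgr n S r)
          = (if k = r then (c0 n * c0 n * 2 ^ n) * A $$ (r, r) else 0)"
        unfolding orth[OF k rc(1)] by (cases "k = r") (simp_all add: mult_ac)
    qed
    also have "\<dots> = A $$ (r, r)" unfolding c0sq using rc by simp
    finally show ?thesis .
  qed
  show "Mch n A $$ (r, c) = sosum (2 ^ n) (\<lambda>S. ketbra (Zhat n S) (Zhat n S)) (Pow {1..n}) A $$ (r, c)"
  proof (cases "r = c")
    case True
    then show ?thesis unfolding L R using main by simp
  next
    case False
    then show ?thesis unfolding L R by simp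
  qed
qed (simp_all add: Mch_def sosum_def)



definition LL :: "nat \<Rightarrow> complex mat list set" where
  "LL n = {us. length us \<le> n - 1 \<and> set us \<subseteq> {SWAP, CNOT}}"

lemma chain_Nil: "chain n [] = 1\<^sub>m (2 ^ n)"
  by (simp add: chain_def)

lemma Nset_eq: assumes "1 \<le> n" shows "Nset n = chain n ` LL n"
proof (rule Set.set_eqI)
  fix g
  show "g \<in> Nset n \<longleftrightarrow> g \<in> chain n ` LL n"
  proof
    assume "g \<in> Nset n"
    then consider "g = 1\<^sub>m (2 ^ n)"
      | i us where "i \<in> {1..n-1}" "g = chain n us" "length us = i" "set us \<subseteq> {SWAP, CNOT}"
      unfolding Nset_def by blast
    then show "g \<in> chain n ` LL n"
    proof cases
      case 1
      then show ?thesis unfolding LL_def using chain_Nil[of n] by (intro image_eqI[of _ _ "[]"]) auto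
    next
      case 2
      then show ?thesis unfolding LL_def by auto
    qed
  next
    assume "g \<in> chain n ` LL n"
    then obtain us where us: "us \<in> LL n" "g = chain n us" by blast
    show "g \<in> Nset n"
    proof (cases "us = []")
      case True
      then show ?thesis using us chain_Nil[of n] unfolding Nset_def by auto
    next
      case False
      then have "length us \<in> {1..n-1}" using us(1) unfolding LL_def by (auto simp: Suc_le_eq)
      then show ?thesis using us unfolding Nset_def LL_def by blast
    qed
  qed
qed

lemma chain_Pm: assumes "1 \<le> n" "us \<in> LL n"
  shows "chain n us = Pm (2 ^ n) (chF n 1 us) \<and> chF n 1 us ` {..<2 ^ n} \<subseteq> {..<2 ^ n}
    \<and> inj_on (chF n 1 us) {..<2 ^ n}"
proof -
  have "1 + length us \<le> n" "set us \<subseteq> {SWAP, CNOT}" using assms unfolding LL_def by auto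
  then show ?thesis unfolding chain_eq using chain'_Pm[of 1 us n] by simp
qed

lemma sign1: assumes "1 \<le> n" "us \<in> LL n"
  shows "sgr n {1} (chF n 1 us r) = sgr n (Sof 1 us) r"
proof -
  have "1 + length us \<le> n" using assms unfolding LL_def by auto
  from sign_chain[OF _ this, of r] have "(if bit (chF n 1 us r) (n - 1) then -1 else 1) = sgr n (Sof 1 us) r"
    by simp
  then show ?thesis by (simp add: sgr_def)
qed

lemma G_eq: assumes "1 \<le> n" "us \<in> LL n" "A \<in> carrier_mat (2 ^ n) (2 ^ n)"
  shows "(omega_dag (chain n us) \<circ> ketbra (Zhat n {1}) (Zhat n {1}) \<circ> omega (chain n us)) A
       = ketbra (Zhat n (Sof 1 us)) (Zhat n (Sof 1 us)) A"
proof -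
  note cp = chain_Pm[OF assms(1,2)]
  let ?z = "\<lambda>r. c0 n * complex_of_real (sgr n {1} r)"
  have "(omega_dag (chain n us) \<circ> ketbra (Zhat n {1}) (Zhat n {1}) \<circ> omega (chain n us)) A
      = omega_dag (Pm (2 ^ n) (chF n 1 us)) (ketbra (Dg (2 ^ n) ?z) (Dg (2 ^ n) ?z) (omega (Pm (2 ^ n) (chF n 1 us)) A))"
    using cp by (simp add: Zhat_Dg)
  also have "\<dots> = ketbra (Dg (2 ^ n) (?z \<circ> chF n 1 us)) (Dg (2 ^ n) (?z \<circ> chF n 1 us)) A"
    using cp assms(3) by (intro key) auto
  also have "?z \<circ> chF n 1 us = (\<lambda>r. c0 n * complex_of_real (sgr n (Sof 1 us) r))"
    using sign1[OF assms(1,2)] by (simp add: comp_def)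
  also have "Dg (2 ^ n) (\<lambda>r. c0 n * complex_of_real (sgr n (Sof 1 us) r)) = Zhat n (Sof 1 us)"
    by (rule Zhat_Dg[symmetric]) (rule Sof_finite)
  finally show ?thesis .
qed

lemma sgr_pow: assumes "T \<subseteq> {1..n}" "i \<in> {1..n}"
  shows "sgr n T (2 ^ (n - i)) = (if i \<in> T then -1 else 1)"
proof -
  have fT: "finite T" using assms(1) by (auto intro: finite_subset)
  have "sgr n T (2 ^ (n - i)) = (\<Prod>k\<in>T. if k = i then -1 else 1)"
    unfolding sgr_def
  proof (rule prod.cong[OF refl])
    fix k assume "k \<in> T"
    then have "k \<in> {1..n}" using assms(1) by auto
    then have "(n - k = n - i) = (k = i)" using assms(2) by auto
    then show "(if bit ((2::nat) ^ (n - i)) (n - k) then -1 else 1) = (if k = i then -1 else (1::real))"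
      by (simp add: bit_exp_iff)
  qed
  also have "\<dots> = (if i \<in> T then -1 else 1)" using fT by (simp add: prod.delta)
  finally show ?thesis .
qed

lemma sgr_inj: assumes "S \<subseteq> {1..n}" "S' \<subseteq> {1..n}" "\<forall>r<2 ^ n. sgr n S r = sgr n S' r"
  shows "S = S'"
proof -
  have "\<forall>i\<in>{1..n}. (i \<in> S) = (i \<in> S')"
  proof
    fix i assume i: "i \<in> {1..n}"
    then have "(2::nat) ^ (n - i) < 2 ^ n" by simp
    then have "sgr n S (2 ^ (n - i)) = sgr n S' (2 ^ (n - i))" using assms(3) by blast
    then show "(i \<in> S) = (i \<in> S')" using sgr_pow[OF assms(1) i] sgr_pow[OF assms(2) i]
      by (auto split: if_splits)
  qed
  then show ?thesis using assms(1,2) by blast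
qed

lemma Sof_inj: assumes "set us \<subseteq> {SWAP, CNOT}" "set vs \<subseteq> {SWAP, CNOT}" "Sof s us = Sof s vs"
  shows "us = vs"
proof -
  have "s + length us \<in> Sof s us" by (simp add: Sof_mem)
  then have "s + length us \<in> Sof s vs" using assms(3) by simp
  then have l1: "length us \<le> length vs" using Sof_sub[of s vs] by auto
  have "s + length vs \<in> Sof s vs" by (simp add: Sof_mem)
  then have "s + length vs \<in> Sof s us" using assms(3) by simp
  then have l2: "length vs \<le> length us" using Sof_sub[of s us] by auto
  have len: "length us = length vs" using l1 l2 by simp
  show ?thesis
  proof (rule nth_equalityI[OF len])
    fix j assume j: "j < length us"
    have "(us ! j = CNOT) = (s + j \<in> Sof s us)" using j by (simp add: Sof_mem)
    also have "\<dots> = (s + j \<in> Sof s vs)" using assms(3) by simp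
    also have "\<dots> = (vs ! j = CNOT)" using j len by (simp add: Sof_mem)
    finally have eq: "(us ! j = CNOT) = (vs ! j = CNOT)" .
    have "us ! j \<in> {SWAP, CNOT}" "vs ! j \<in> {SWAP, CNOT}" using assms(1,2) j len nth_mem by (metis subsetD)+
    then show "us ! j = vs ! j" using eq by auto
  qed
qed

lemma Sof_LL_sub: assumes "1 \<le> n" "us \<in> LL n" shows "Sof 1 us \<subseteq> {1..n}"
proof -
  have a: "1 + length us \<le> n" using assms unfolding LL_def by auto
  show ?thesis by (rule order_trans[OF Sof_sub]) (use a in auto)
qed

lemma Sof_bij: assumes "1 \<le> n" shows "bij_betw (Sof 1) (LL n) (Pow {1..n} - {{}})"
  unfolding bij_betw_def
proof
  show "inj_on (Sof 1) (LL n)"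
    by (rule inj_onI) (auto simp: LL_def intro: Sof_inj)
  show "Sof 1 ` LL n = Pow {1..n} - {{}}"
  proof
    show "Sof 1 ` LL n \<subseteq> Pow {1..n} - {{}}"
    proof
      fix S assume "S \<in> Sof 1 ` LL n"
      then obtain us where us: "us \<in> LL n" "S = Sof 1 us" by blast
      have "1 + length us \<in> S" using us(2) by (simp add: Sof_mem)
      then show "S \<in> Pow {1..n} - {{}}" using Sof_LL_sub[OF assms us(1)] us(2) by auto
    qed
  next
    show "Pow {1..n} - {{}} \<subseteq> Sof 1 ` LL n"
    proof
      fix S assume S: "S \<in> Pow {1..n} - {{}}"
      then have fS: "finite S" and ne: "S \<noteq> {}" and sub: "S \<subseteq> {1..n}" by (auto intro: finite_subset)
      define m where "m = Max S"
      have mS: "m \<in> S" using fS ne by (simp add: m_def)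
      have m1: "1 \<le> m" "m \<le> n" using mS sub by auto
      have mge: "\<And>i. i \<in> S \<Longrightarrow> i \<le> m" using fS by (simp add: m_def)
      define us where "us = map (\<lambda>j. if 1 + j \<in> S then CNOT else SWAP) [0..<m - 1]"
      have lus: "length us = m - 1" by (simp add: us_def)
      have usL: "us \<in> LL n" using m1 unfolding LL_def us_def by auto
      have ne2: "SWAP \<noteq> CNOT" using CNOT_ne_SWAP by metis
      have "Sof 1 us = S"
      proof (rule Set.set_eqI)
        fix i
        have "i \<in> Sof 1 us \<longleftrightarrow> i = m \<or> (1 \<le> i \<and> i < m \<and> us ! (i - 1) = CNOT)"
          using m1 by (simp add: Sof_mem lus)
        also have "\<dots> \<longleftrightarrow> i \<in> S"
        proof
          assume "i = m \<or> (1 \<le> i \<and> i < m \<and> us ! (i - 1) = CNOT)"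
          then show "i \<in> S"
          proof
            assume "i = m" then show ?thesis using mS by simp
          next
            assume h: "1 \<le> i \<and> i < m \<and> us ! (i - 1) = CNOT"
            have b: "1 \<le> i" "i < m" using h by auto
            have "us ! (i - 1) = (if i \<in> S then CNOT else SWAP)" using b by (simp add: us_def)
            then show ?thesis using h ne2 by (auto split: if_splits)
          qed
        next
          assume iS: "i \<in> S"
          show "i = m \<or> (1 \<le> i \<and> i < m \<and> us ! (i - 1) = CNOT)"
          proof (cases "i = m")
            case False
            then have h: "1 \<le> i" "i < m" using mge[OF iS] iS sub by auto
            then have "us ! (i - 1) = (if i \<in> S then CNOT else SWAP)" by (simp add: us_def)
            then show ?thesis using h iS by simp
          qed simp
        qed
        finally show "i \<in> Sof 1 us \<longleftrightarrow> i \<in> S" .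
      qed
      then show "S \<in> Sof 1 ` LL n" using usL by blast
    qed
  qed
qed

lemma inj_chain: assumes "1 \<le> n" shows "inj_on (chain n) (LL n)"
proof (rule inj_onI)
  fix us vs assume us: "us \<in> LL n" and vs: "vs \<in> LL n" and eq: "chain n us = chain n vs"
  note cu = chain_Pm[OF assms us] and cv = chain_Pm[OF assms vs]
  have Feq: "\<And>c. c < 2 ^ n \<Longrightarrow> chF n 1 us c = chF n 1 vs c"
  proof -
    fix c :: nat assume c: "c < 2 ^ n"
    then have fc: "chF n 1 us c < 2 ^ n" using cu by auto
    have "Pm (2 ^ n) (chF n 1 us) $$ (chF n 1 us c, c) = 1" using fc c by simp
    then have "Pm (2 ^ n) (chF n 1 vs) $$ (chF n 1 us c, c) = 1" using eq cu cv by simp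
    then show "chF n 1 us c = chF n 1 vs c" using fc c by (simp split: if_splits)
  qed
  have "\<forall>r<2 ^ n. sgr n (Sof 1 us) r = sgr n (Sof 1 vs) r"
    using sign1[OF assms us] sign1[OF assms vs] Feq by metis
  then have "Sof 1 us = Sof 1 vs" using sgr_inj Sof_LL_sub[OF assms us] Sof_LL_sub[OF assms vs] by blast
  then show "us = vs" using Sof_inj us vs unfolding LL_def by blast
qed

lemma part2: assumes n: "1 \<le> n" and A: "A \<in> carrier_mat (2 ^ n) (2 ^ n)"
  shows "sosum (2 ^ n) (\<lambda>S. ketbra (Zhat n S) (Zhat n S)) (Pow {1..n}) A
           = soplus (2 ^ n) (ketbra (Idhat n) (Idhat n))
               (sosum (2 ^ n) (\<lambda>g. omega_dag g \<circ> ketbra (Zhat n {1}) (Zhat n {1}) \<circ> omega g)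
                  (Nset n)) A"
proof (rule eq_matI)
  fix r c
  assume "r < dim_row (soplus (2 ^ n) (ketbra (Idhat n) (Idhat n))
               (sosum (2 ^ n) (\<lambda>g. omega_dag g \<circ> ketbra (Zhat n {1}) (Zhat n {1}) \<circ> omega g)
                  (Nset n)) A)"
    "c < dim_col (soplus (2 ^ n) (ketbra (Idhat n) (Idhat n))
               (sosum (2 ^ n) (\<lambda>g. omega_dag g \<circ> ketbra (Zhat n {1}) (Zhat n {1}) \<circ> omega g)
                  (Nset n)) A)"
  then have rc: "r < 2 ^ n" "c < 2 ^ n" by (simp_all add: soplus_def sosum_def)
  define K where "K S = ketbra (Zhat n S) (Zhat n S) A $$ (r, c)" for S
  define G where "G g = (omega_dag g \<circ> ketbra (Zhat n {1}) (Zhat n {1}) \<circ> omega g) A $$ (r, c)" for g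
  have lhs: "sosum (2 ^ n) (\<lambda>S. ketbra (Zhat n S) (Zhat n S)) (Pow {1..n}) A $$ (r, c)
      = K {} + (\<Sum>S\<in>Pow {1..n} - {{}}. K S)"
  proof -
    have "sosum (2 ^ n) (\<lambda>S. ketbra (Zhat n S) (Zhat n S)) (Pow {1..n}) A $$ (r, c) = (\<Sum>S\<in>Pow {1..n}. K S)"
      unfolding K_def sosum_def by (rule msum_idx[OF rc])
    also have "\<dots> = K {} + (\<Sum>S\<in>Pow {1..n} - {{}}. K S)"
      by (rule sum.remove) auto
    finally show ?thesis .
  qed
  have s2: "(\<Sum>g\<in>Nset n. G g) = (\<Sum>S\<in>Pow {1..n} - {{}}. K S)"
  proof -
    have "(\<Sum>g\<in>Nset n. G g) = (\<Sum>us\<in>LL n. G (chain n us))"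
      unfolding Nset_eq[OF n] by (simp add: sum.reindex[OF inj_chain[OF n]])
    also have "\<dots> = (\<Sum>us\<in>LL n. K (Sof 1 us))"
    proof (rule sum.cong[OF refl])
      fix us assume us: "us \<in> LL n"
      show "G (chain n us) = K (Sof 1 us)" unfolding G_def K_def G_eq[OF n us A] ..
    qed
    also have "\<dots> = (\<Sum>S\<in>Pow {1..n} - {{}}. K S)"
      by (rule sum.reindex_bij_betw[OF Sof_bij[OF n]])
    finally show ?thesis .
  qed
  have ms: "msum (2 ^ n) (\<lambda>g. (omega_dag g \<circ> ketbra (Zhat n {1}) (Zhat n {1}) \<circ> omega g) A) (Nset n) $$ (r, c)
      = (\<Sum>g\<in>Nset n. G g)"
    unfolding G_def by (rule msum_idx[OF rc])
  have kI: "ketbra (Idhat n) (Idhat n) A $$ (r, c) = K {}"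
    unfolding K_def Idhat_Zhat ..
  have rhs: "soplus (2 ^ n) (ketbra (Idhat n) (Idhat n))
               (sosum (2 ^ n) (\<lambda>g. omega_dag g \<circ> ketbra (Zhat n {1}) (Zhat n {1}) \<circ> omega g)
                  (Nset n)) A $$ (r, c) = K {} + (\<Sum>g\<in>Nset n. G g)"
  proof -
    let ?M = "msum (2 ^ n) (\<lambda>g. (omega_dag g \<circ> ketbra (Zhat n {1}) (Zhat n {1}) \<circ> omega g) A) (Nset n)"
    have e1: "soplus (2 ^ n) (ketbra (Idhat n) (Idhat n))
               (sosum (2 ^ n) (\<lambda>g. omega_dag g \<circ> ketbra (Zhat n {1}) (Zhat n {1}) \<circ> omega g)
                  (Nset n)) A = ketbra (Idhat n) (Idhat n) A + ?M"
      by (simp only: soplus_def sosum_def)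
    have e2: "(ketbra (Idhat n) (Idhat n) A + ?M) $$ (r, c) = ketbra (Idhat n) (Idhat n) A $$ (r, c) + ?M $$ (r, c)"
      by (rule index_add_mat(1)) (simp_all add: rc)
    show ?thesis unfolding e1 e2 ms kI ..
  qed
  show "sosum (2 ^ n) (\<lambda>S. ketbra (Zhat n S) (Zhat n S)) (Pow {1..n}) A $$ (r, c) =
        soplus (2 ^ n) (ketbra (Idhat n) (Idhat n))
               (sosum (2 ^ n) (\<lambda>g. omega_dag g \<circ> ketbra (Zhat n {1}) (Zhat n {1}) \<circ> omega g)
                  (Nset n)) A $$ (r, c)"
    unfolding lhs rhs s2 ..
qed (simp_all add: soplus_def sosum_def)

theorem lemma2:
  fixes n :: nat
  assumes "n \<ge> 1"
  shows "\<forall>A \<in> carrier_mat (2 ^ n) (2 ^ n).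
           Mch n A = sosum (2 ^ n) (\<lambda>S. ketbra (Zhat n S) (Zhat n S)) (Pow {1..n}) A
         \<and> sosum (2 ^ n) (\<lambda>S. ketbra (Zhat n S) (Zhat n S)) (Pow {1..n}) A
           = soplus (2 ^ n) (ketbra (Idhat n) (Idhat n))
               (sosum (2 ^ n) (\<lambda>g. omega_dag g \<circ> ketbra (Zhat n {1}) (Zhat n {1}) \<circ> omega g)
                  (Nset n)) A"
  using part1 part2[OF assms] by blast

end
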